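(* Assume Assumption A and that the limiting chain $X_R$ has $\mathfrak n\ge2$ recurrent classes $\mathscr E_1,\dots,\mathscr E_{\mathfrak n}$. Let $\mathscr E=\bigcup_x\mathscr E_x$, $\breve{\mathscr E}_x=\bigcup_{y\ne x}\mathscr E_y$, let $R^{\mathscr E}_N$ be the jump rates of the trace of $\eta^N$ on $\mathscr E$, and define $$\frac1{\gamma_N}=\sum_{x=1}^{\mathfrak n}\sum_{\eta\in\mathscr E_x}\sum_{\xi\in\breve{\mathscr E}_x}R^{\mathscr E}_N(\eta,\xi).$$ Then $\lim_{N\to\infty}\alpha_N/\gamma_N=0$.
   Context: Setting: $E$ is a fixed finite set; for each $N\ge1$, $(\eta^N_t)$ is a continuous-time irreducible Markov chain on $E$ with jump rates $R_N(\eta,\xi)$ and unique invariant probability measure $\mu_N$. For nonempty $F\subset E$ the trace on $F$ is $\eta^F_t=\eta^N_{S_F(t)}$ with $S_F(t)=\sup\{s:\int_0^s\mathbf 1\{\eta^N_r\in F\}dr\le t\}$, an irreducible Markov chain on $F$ with jump rates $R^F_N$. Ordered families: a finite family of sequences of positive reals $(a^r_N)_{N\ge1}$, $r\in\mathfrak R$, is ordered if for all $r\neq s$ the sequence $\arctan(a^r_N/a^s_N)$ converges. Assumption A: (i) for each $\eta\neq\xi$, either $R_N(\eta,\xi)=0$ for all $N$ or $R_N(\eta,\xi)>0$ for all $N$; let $\mathbb B$ be the set of pairs with positive rates. (ii) For every $m\ge1$ the family $\prod_{(\eta,\xi)\in\mathbb B}R_N(\eta,\xi)^{k(\eta,\xi)}$,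 $k:\mathbb B\to\mathbb Z_+$ with $\sum k=m$, is ordered. Limiting chain: $\alpha_N^{-1}=\sum_\eta\sum_{\xi\ne\eta}R_N(\eta,\xi)$; $R(\eta,\xi)=\lim_N\alpha_NR_N(\eta,\xi)\in[0,1]$ (exists under Assumption A); $X_R$ is the Markov chain on $E$ with rates $R$. *)

theory Defs
  imports Complex_Main
begin

text \<open>Rates are functions Q :: 'a => 'a => real; only off-diagonal values on E matter.\<close>

definition rate_edges :: "'a set \<Rightarrow> ('a \<Rightarrow> 'a \<Rightarrow> real) \<Rightarrow> ('a \<times> 'a) set" where
  "rate_edges E Q = {(x, y). x \<in> E \<and> y \<in> E \<and> x \<noteq> y \<and> Q x y > 0}"

definition irreducible_rates :: "'a set \<Rightarrow> ('a \<Rightarrow> 'a \<Rightarrow> real) \<Rightarrow> bool" where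
  "irreducible_rates E Q \<longleftrightarrow> (\<forall>x\<in>E. \<forall>y\<in>E. (x, y) \<in> (rate_edges E Q)\<^sup>*)"

definition reaches :: "'a set \<Rightarrow> ('a \<Rightarrow> 'a \<Rightarrow> real) \<Rightarrow> 'a \<Rightarrow> 'a \<Rightarrow> bool" where
  "reaches E Q x y \<longleftrightarrow> (x, y) \<in> (rate_edges E Q)\<^sup>*"

definition recurrent_state :: "'a set \<Rightarrow> ('a \<Rightarrow> 'a \<Rightarrow> real) \<Rightarrow> 'a \<Rightarrow> bool" where
  "recurrent_state E Q x \<longleftrightarrow> x \<in> E \<and> (\<forall>y. reaches E Q x y \<longrightarrow> reaches E Q y x)"

definition recurrent_classes :: "'a set \<Rightarrow> ('a \<Rightarrow> 'a \<Rightarrow> real) \<Rightarrow> 'a set set" where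
  "recurrent_classes E Q =
     {{y \<in> E. reaches E Q x y \<and> reaches E Q y x} | x. recurrent_state E Q x}"

definition holding_rate :: "'a set \<Rightarrow> ('a \<Rightarrow> 'a \<Rightarrow> real) \<Rightarrow> 'a \<Rightarrow> real" where
  "holding_rate E Q x = (\<Sum>z\<in>E - {x}. Q x z)"

definition jump_prob :: "'a set \<Rightarrow> ('a \<Rightarrow> 'a \<Rightarrow> real) \<Rightarrow> 'a \<Rightarrow> 'a \<Rightarrow> real" where
  "jump_prob E Q x z = (if z = x then 0 else Q x z / holding_rate E Q x)"

text \<open>avoid_kernel E Q F n z w: probability that the jump chain started at z is at w after
  n steps having stayed in E - F during steps 0..n.\<close>
fun avoid_kernel :: "'a set \<Rightarrow> ('a \<Rightarrow> 'a \<Rightarrow> real) \<Rightarrow> 'a set \<Rightarrow> nat \<Rightarrow> 'a \<Rightarrow> 'a \<Rightarrow> real" where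
  "avoid_kernel E Q F 0 z w = (if z = w then 1 else 0)"
| "avoid_kernel E Q F (Suc n) z w = (\<Sum>v\<in>E - F. avoid_kernel E Q F n z v * jump_prob E Q v w)"

text \<open>Probability that the jump chain started at z (in E - F) enters F for the first time at xi.\<close>
definition hit_prob :: "'a set \<Rightarrow> ('a \<Rightarrow> 'a \<Rightarrow> real) \<Rightarrow> 'a set \<Rightarrow> 'a \<Rightarrow> 'a \<Rightarrow> real" where
  "hit_prob E Q F z xi = (\<Sum>n. \<Sum>w\<in>E - F. avoid_kernel E Q F n z w * jump_prob E Q w xi)"

text \<open>Jump rates R^F of the trace on F (for eta, xi in F, eta ~= xi):
  R^F(eta,xi) = R(eta,xi) + sum_{zeta not in F} R(eta,zeta) P_zeta[first entry into F at xi].\<close>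
definition trace_rate :: "'a set \<Rightarrow> ('a \<Rightarrow> 'a \<Rightarrow> real) \<Rightarrow> 'a set \<Rightarrow> 'a \<Rightarrow> 'a \<Rightarrow> real" where
  "trace_rate E Q F eta xi = Q eta xi + (\<Sum>z\<in>E - F. Q eta z * hit_prob E Q F z xi)"

definition ordered_family :: "'r set \<Rightarrow> ('r \<Rightarrow> nat \<Rightarrow> real) \<Rightarrow> bool" where
  "ordered_family I a \<longleftrightarrow> finite I \<and> (\<forall>r\<in>I. \<forall>N. a r N > 0) \<and>
     (\<forall>r\<in>I. \<forall>s\<in>I. r \<noteq> s \<longrightarrow> convergent (\<lambda>N. arctan (a r N / a s N)))"

definition pos_bonds :: "'a set \<Rightarrow> (nat \<Rightarrow> 'a \<Rightarrow> 'a \<Rightarrow> real) \<Rightarrow> ('a \<times> 'a) set" where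
  "pos_bonds E R = {(x, y). x \<in> E \<and> y \<in> E \<and> x \<noteq> y \<and> (\<forall>N. R N x y > 0)}"

definition assumptionA :: "'a set \<Rightarrow> (nat \<Rightarrow> 'a \<Rightarrow> 'a \<Rightarrow> real) \<Rightarrow> bool" where
  "assumptionA E R \<longleftrightarrow>
     (\<forall>x\<in>E. \<forall>y\<in>E. x \<noteq> y \<longrightarrow> (\<forall>N. R N x y = 0) \<or> (\<forall>N. R N x y > 0)) \<and>
     (\<forall>m::nat. m \<ge> 1 \<longrightarrow>
        ordered_family
          {k :: 'a \<times> 'a \<Rightarrow> nat. (\<forall>p. p \<notin> pos_bonds E R \<longrightarrow> k p = 0) \<and>
                                 (\<Sum>p\<in>pos_bonds E R. k p) = m}
          (\<lambda>k N. \<Prod>p\<in>pos_bonds E R. R N (fst p) (snd p) ^ k p))"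

definition alpha :: "'a set \<Rightarrow> (nat \<Rightarrow> 'a \<Rightarrow> 'a \<Rightarrow> real) \<Rightarrow> nat \<Rightarrow> real" where
  "alpha E R N = 1 / (\<Sum>x\<in>E. \<Sum>y\<in>E - {x}. R N x y)"

definition limit_rates :: "'a set \<Rightarrow> (nat \<Rightarrow> 'a \<Rightarrow> 'a \<Rightarrow> real) \<Rightarrow> 'a \<Rightarrow> 'a \<Rightarrow> real" where
  "limit_rates E R x y = lim (\<lambda>N. alpha E R N * R N x y)"

definition gamma :: "'a set \<Rightarrow> (nat \<Rightarrow> 'a \<Rightarrow> 'a \<Rightarrow> real) \<Rightarrow> nat \<Rightarrow> real" where
  "gamma E R N =
     (let Cs = recurrent_classes E (limit_rates E R); Es = \<Union>Cs in
      1 / (\<Sum>C\<in>Cs. \<Sum>x\<in>C. \<Sum>y\<in>Es - C. trace_rate E (R N) Es x y))"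

end

theory Submission
  imports Defs
begin

lemma jump_prob_nonneg:
  assumes "\<And>x y. x \<in> E \<Longrightarrow> y \<in> E \<Longrightarrow> x \<noteq> y \<Longrightarrow> Q x y \<ge> 0"
    and "v \<in> E" "w \<in> E"
  shows "jump_prob E Q v w \<ge> 0"
proof -
  have "holding_rate E Q v \<ge> 0" unfolding holding_rate_def
    using assms by (intro sum_nonneg) auto
  then show ?thesis using assms unfolding jump_prob_def by auto
qed

lemma jump_prob_sum:
  assumes fin: "finite E" and "\<And>x y. x \<in> E \<Longrightarrow> y \<in> E \<Longrightarrow> x \<noteq> y \<Longrightarrow> Q x y \<ge> 0"
    and v: "v \<in> E"
  shows "(\<Sum>u\<in>E. jump_prob E Q v u) \<le> 1"
proof -
  have "(\<Sum>u\<in>E. jump_prob E Q v u) = (\<Sum>u\<in>E - {v}. jump_prob E Q v u) + jump_prob E Q v v"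
    using fin v by (metis add.commute sum.remove)
  also have "\<dots> = (\<Sum>u\<in>E - {v}. Q v u / holding_rate E Q v)"
    unfolding jump_prob_def by (auto intro: sum.cong)
  also have "\<dots> = holding_rate E Q v / holding_rate E Q v"
    unfolding holding_rate_def by (simp only: sum_divide_distrib)
  also have "\<dots> \<le> 1" by (simp only: divide_le_eq_1) auto
  finally show ?thesis .
qed

lemma avoid_nonneg:
  assumes "\<And>x y. x \<in> E \<Longrightarrow> y \<in> E \<Longrightarrow> x \<noteq> y \<Longrightarrow> Q x y \<ge> 0"
    and "w \<in> E"
  shows "avoid_kernel E Q F n z w \<ge> 0"
  using assms(2)
proof (induction n arbitrary: w)
  case 0 then show ?case by simp
next
  case (Suc n)
  show ?case using Suc jump_prob_nonneg[OF assms(1)]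
    by (auto intro!: sum_nonneg mult_nonneg_nonneg)
qed

lemma hit_prob_bounds:
  assumes fin: "finite E" and nn: "\<And>x y. x \<in> E \<Longrightarrow> y \<in> E \<Longrightarrow> x \<noteq> y \<Longrightarrow> Q x y \<ge> 0"
    and FE: "F \<subseteq> E" and xi: "xi \<in> F"
  shows "0 \<le> hit_prob E Q F z xi \<and> hit_prob E Q F z xi \<le> 1"
proof -
  define a where "a n w = avoid_kernel E Q F n z w" for n w
  define h where "h n = (\<Sum>w\<in>E - F. a n w * jump_prob E Q w xi)" for n
  define m where "m n = (\<Sum>w\<in>E - F. a n w)" for n
  have finF: "finite F" using fin FE finite_subset by blast
  have a_nn: "a n w \<ge> 0" if "w \<in> E" for n w using avoid_nonneg[OF nn that] a_def by simp
  have P_nn: "jump_prob E Q v u \<ge> 0" if "v \<in> E" "u \<in> E" for v u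
    using jump_prob_nonneg[OF nn that] .
  have h_nn: "h n \<ge> 0" for n unfolding h_def
    using a_nn P_nn xi FE by (auto intro!: sum_nonneg mult_nonneg_nonneg)
  have step: "h n + m (Suc n) \<le> m n" for n
  proof -
    have "h n \<le> (\<Sum>u\<in>F. \<Sum>v\<in>E - F. a n v * jump_prob E Q v u)"
    proof -
      have "h n = (\<Sum>u\<in>{xi}. \<Sum>v\<in>E - F. a n v * jump_prob E Q v u)" by (simp add: h_def)
      also have "\<dots> \<le> (\<Sum>u\<in>F. \<Sum>v\<in>E - F. a n v * jump_prob E Q v u)"
        using xi FE finF a_nn P_nn
        by (intro sum_mono2) (auto intro!: sum_nonneg mult_nonneg_nonneg)
      finally show ?thesis .
    qed
    moreover have "m (Suc n) = (\<Sum>u\<in>E - F. \<Sum>v\<in>E - F. a n v * jump_prob E Q v u)"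
      by (simp add: m_def a_def)
    ultimately have "h n + m (Suc n) \<le> (\<Sum>u\<in>E. \<Sum>v\<in>E - F. a n v * jump_prob E Q v u)"
      using sum.subset_diff[OF FE fin, of "\<lambda>u. \<Sum>v\<in>E - F. a n v * jump_prob E Q v u"]
      by simp
    also have "\<dots> = (\<Sum>v\<in>E - F. a n v * (\<Sum>u\<in>E. jump_prob E Q v u))"
      by (subst sum.swap) (simp add: sum_distrib_left)
    also have "\<dots> \<le> (\<Sum>v\<in>E - F. a n v * 1)"
      using a_nn jump_prob_sum[OF fin nn]
      by (intro sum_mono mult_left_mono) auto
    finally show ?thesis by (simp add: m_def)
  qed
  have m_nn: "m n \<ge> 0" for n unfolding m_def using a_nn by (auto intro: sum_nonneg)
  have m0: "m 0 \<le> 1"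
  proof -
    have "m 0 = (\<Sum>w\<in>E - F. if z = w then 1 else 0)" by (simp add: m_def a_def)
    also have "\<dots> \<le> 1" using fin by (simp add: sum.delta)
    finally show ?thesis .
  qed
  have part: "(\<Sum>i<M. h i) + m M \<le> m 0" for M
  proof (induction M)
    case 0 then show ?case by simp
  next
    case (Suc M) then show ?case using step[of M] by simp
  qed
  have bnd: "(\<Sum>i<M. h i) \<le> 1" for M using part[of M] m_nn[of M] m0 by linarith
  have hp: "hit_prob E Q F z xi = suminf h" unfolding hit_prob_def h_def a_def by simp
  have sm: "summable h" by (rule summableI_nonneg_bounded[OF h_nn bnd])
  show ?thesis unfolding hp using suminf_nonneg[OF sm h_nn] suminf_le_const[OF sm bnd] by simp
qed


lemma finite_pos_bonds: "finite E \<Longrightarrow> finite (pos_bonds E R)"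
  by (rule finite_subset[of _ "E \<times> E"]) (auto simp: pos_bonds_def)

lemma alpha_eq_B:
  assumes fin: "finite E"
    and A: "assumptionA E R"
  shows "alpha E R N = 1 / (\<Sum>q\<in>pos_bonds E R. R N (fst q) (snd q))"
proof -
  let ?D = "Sigma E (\<lambda>x. E - {x})"
  have "(\<Sum>x\<in>E. \<Sum>y\<in>E - {x}. R N x y) = (\<Sum>q\<in>?D. R N (fst q) (snd q))"
    using fin by (simp add: sum.Sigma case_prod_beta')
  also have "\<dots> = (\<Sum>q\<in>pos_bonds E R. R N (fst q) (snd q))"
  proof (rule sum.mono_neutral_right)
    show "finite ?D" using fin by auto
    show "pos_bonds E R \<subseteq> ?D" unfolding pos_bonds_def by auto
    show "\<forall>q\<in>?D - pos_bonds E R. R N (fst q) (snd q) = 0"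
      using A unfolding assumptionA_def pos_bonds_def by fastforce
  qed
  finally show ?thesis unfolding alpha_def by simp
qed

lemma ordered_bonds:
  assumes fin: "finite E" and A: "assumptionA E R"
    and q: "q \<in> pos_bonds E R" and q': "q' \<in> pos_bonds E R" and ne: "q \<noteq> q'"
  shows "convergent (\<lambda>N. arctan (R N (fst q) (snd q) / R N (fst q') (snd q')))"
proof -
  let ?B = "pos_bonds E R"
  have finB: "finite ?B" by (rule finite_pos_bonds[OF fin])
  define d where "d q = (\<lambda>p. if p = q then (1::nat) else 0)" for q :: "'a \<times> 'a"
  let ?K = "{k :: 'a \<times> 'a \<Rightarrow> nat. (\<forall>p. p \<notin> ?B \<longrightarrow> k p = 0) \<and> (\<Sum>p\<in>?B. k p) = 1}"
  have ord: "ordered_family ?K (\<lambda>k N. \<Prod>p\<in>?B. R N (fst p) (snd p) ^ k p)"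
    using A unfolding assumptionA_def by auto
  have inK: "d r \<in> ?K" if "r \<in> ?B" for r
    using that finB by (auto simp: d_def sum.delta)
  have prodd: "(\<Prod>p\<in>?B. R N (fst p) (snd p) ^ d r p) = R N (fst r) (snd r)" if "r \<in> ?B" for r N
  proof -
    have "(\<Prod>p\<in>?B. R N (fst p) (snd p) ^ d r p) = (\<Prod>p\<in>?B. if p = r then R N (fst p) (snd p) else 1)"
      by (rule prod.cong) (auto simp: d_def)
    also have "\<dots> = R N (fst r) (snd r)" using finB that by (simp add: prod.delta)
    finally show ?thesis .
  qed
  have dne: "d q \<noteq> d q'" using ne unfolding d_def by (metis zero_neq_one)
  have "convergent (\<lambda>N. arctan ((\<Prod>p\<in>?B. R N (fst p) (snd p) ^ d q p) / (\<Prod>p\<in>?B. R N (fst p) (snd p) ^ d q' p)))"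
    using ord inK[OF q] inK[OF q'] dne unfolding ordered_family_def by blast
  then show ?thesis using prodd[OF q] prodd[OF q'] by simp
qed

lemma bond_ratio_conv:
  assumes fin: "finite E" and A: "assumptionA E R"
    and p: "p \<in> pos_bonds E R"
  shows "convergent (\<lambda>N. R N (fst p) (snd p) / (\<Sum>q\<in>pos_bonds E R. R N (fst q) (snd q)))"
proof -
  let ?B = "pos_bonds E R"
  define g where "g N q = R N (fst q) (snd q)" for N q
  define S where "S N = (\<Sum>q\<in>?B. g N q)" for N
  have finB: "finite ?B" by (rule finite_pos_bonds[OF fin])
  have gpos: "g N q > 0" if "q \<in> ?B" for N q using that unfolding pos_bonds_def g_def by auto
  have Sge: "S N \<ge> g N q" if "q \<in> ?B" for N q
    unfolding S_def using finB that gpos by (intro member_le_sum) (auto intro: less_imp_le)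
  have goal: "convergent (\<lambda>N. g N p / S N)"
  proof (cases "\<exists>q\<in>?B. q \<noteq> p \<and> (\<lambda>N. arctan (g N q / g N p)) \<longlonglongrightarrow> pi/2")
    case True
    then obtain q where q: "q \<in> ?B" "q \<noteq> p" and lim: "(\<lambda>N. arctan (g N q / g N p)) \<longlonglongrightarrow> pi/2" by blast
    have eq: "arctan (g N p / g N q) = pi/2 - arctan (g N q / g N p)" for N
      using arctan_inverse[of "g N q / g N p"] gpos[OF q(1), of N] gpos[OF p, of N] by simp
    have "(\<lambda>N. arctan (g N p / g N q)) \<longlonglongrightarrow> pi/2 - pi/2"
      unfolding eq by (intro tendsto_intros lim)
    then have "(\<lambda>N. tan (arctan (g N p / g N q))) \<longlonglongrightarrow> tan 0"
      by (intro isCont_tendsto_compose[OF isCont_tan]) auto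
    then have l0: "(\<lambda>N. g N p / g N q) \<longlonglongrightarrow> 0" by (simp add: tan_arctan)
    have "(\<lambda>N. g N p / S N) \<longlonglongrightarrow> 0"
    proof (rule tendsto_sandwich[OF _ _ tendsto_const l0])
      show "\<forall>\<^sub>F N in sequentially. 0 \<le> g N p / S N"
        using gpos[OF p] Sge[OF p] by (intro always_eventually allI divide_nonneg_nonneg) (metis less_imp_le order.trans)+
      show "\<forall>\<^sub>F N in sequentially. g N p / S N \<le> g N p / g N q"
        using gpos[OF p] gpos[OF q(1)] Sge[OF q(1)]
        by (intro always_eventually allI divide_left_mono) (metis less_imp_le mult_pos_pos order.strict_trans2)+
    qed
    then show ?thesis by (rule convergentI)
  next
    case False
    have cq: "convergent (\<lambda>N. g N q / g N p)" if q: "q \<in> ?B" for q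
    proof (cases "q = p")
      case True
      have "(\<lambda>N. g N q / g N p) = (\<lambda>N. 1)" using True gpos[OF p] by (simp add: less_imp_neq[symmetric])
      then show ?thesis by (simp add: convergent_const)
    next
      case ne: False
      have "convergent (\<lambda>N. arctan (g N q / g N p))"
        using ordered_bonds[OF fin A q p ne] unfolding g_def .
      then obtain c where c: "(\<lambda>N. arctan (g N q / g N p)) \<longlonglongrightarrow> c" by (auto simp: convergent_def)
      have cne: "c \<noteq> pi/2" using False c q ne by blast
      have ub: "\<forall>N. arctan (g N q / g N p) \<le> pi/2" using arctan_ubound less_imp_le by blast
      have lb: "\<forall>N. arctan (g N q / g N p) \<ge> 0" using gpos q p by (simp add: less_imp_le)
      have "c \<le> pi/2" by (rule tendsto_upperbound[OF c always_eventually[OF ub]]) simp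
      moreover have "c \<ge> 0" by (rule tendsto_lowerbound[OF c always_eventually[OF lb]]) simp
      ultimately have "cos c \<noteq> 0" using cne cos_gt_zero_pi[of c] by auto
      then have "(\<lambda>N. tan (arctan (g N q / g N p))) \<longlonglongrightarrow> tan c"
        by (intro isCont_tendsto_compose[OF isCont_tan c])
      then show ?thesis by (auto simp: tan_arctan intro: convergentI)
    qed
    then obtain lq where lq: "\<And>q. q \<in> ?B \<Longrightarrow> (\<lambda>N. g N q / g N p) \<longlonglongrightarrow> lq q"
      unfolding convergent_def by metis
    have T: "(\<lambda>N. \<Sum>q\<in>?B. g N q / g N p) \<longlonglongrightarrow> (\<Sum>q\<in>?B. lq q)"
      by (intro tendsto_sum lq)
    have ge1: "(\<Sum>q\<in>?B. g N q / g N p) \<ge> 1" for N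
    proof -
      have "g N p / g N p \<le> (\<Sum>q\<in>?B. g N q / g N p)"
        using finB p gpos by (intro member_le_sum) (simp_all, metis DiffD1 less_imp_le divide_pos_pos)
      then show ?thesis using gpos[OF p, of N] by simp
    qed
    have "(\<Sum>q\<in>?B. lq q) \<ge> 1" by (rule tendsto_lowerbound[OF T always_eventually]) (auto intro: ge1)
    then have "(\<lambda>N. 1 / (\<Sum>q\<in>?B. g N q / g N p)) \<longlonglongrightarrow> 1 / (\<Sum>q\<in>?B. lq q)"
      by (intro tendsto_intros T) auto
    moreover have "1 / (\<Sum>q\<in>?B. g N q / g N p) = g N p / S N" for N
      using gpos[OF p, of N] by (simp add: S_def sum_divide_distrib[symmetric])
    ultimately show ?thesis by (auto intro: convergentI)
  qed
  then show ?thesis unfolding g_def S_def .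
qed


lemma alphaR_conv:
  assumes fin: "finite E" and A: "assumptionA E R"
    and xy: "x \<in> E" "y \<in> E" "x \<noteq> y"
  shows "convergent (\<lambda>N. alpha E R N * R N x y)"
proof (cases "(x, y) \<in> pos_bonds E R")
  case True
  have "alpha E R N * R N x y = R N (fst (x,y)) (snd (x,y)) / (\<Sum>q\<in>pos_bonds E R. R N (fst q) (snd q))" for N
    using alpha_eq_B[OF fin A, of N] by simp
  then show ?thesis using bond_ratio_conv[OF fin A True] by simp
next
  case False
  then have "\<forall>N. R N x y = 0" using A xy unfolding assumptionA_def pos_bonds_def by auto
  then show ?thesis by (simp add: convergent_const)
qed

lemma alpha_nonneg:
  assumes "\<And>N x y. x \<in> E \<Longrightarrow> y \<in> E \<Longrightarrow> x \<noteq> y \<Longrightarrow> R N x y \<ge> 0"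
  shows "alpha E R N \<ge> 0"
  unfolding alpha_def using assms by (auto intro!: sum_nonneg)

lemma class_escape_zero:
  assumes fin: "finite E" and nn: "\<And>N x y. x \<in> E \<Longrightarrow> y \<in> E \<Longrightarrow> x \<noteq> y \<Longrightarrow> R N x y \<ge> 0"
    and A: "assumptionA E R"
    and C: "C \<in> recurrent_classes E (limit_rates E R)" and eta: "eta \<in> C"
    and z: "z \<in> E" "z \<notin> C"
  shows "(\<lambda>N. alpha E R N * R N eta z) \<longlonglongrightarrow> 0"
proof -
  let ?Q = "limit_rates E R"
  obtain x where rx: "recurrent_state E ?Q x" and Cdef: "C = {y \<in> E. reaches E ?Q x y \<and> reaches E ?Q y x}"
    using C unfolding recurrent_classes_def by blast
  have etaE: "eta \<in> E" and rxe: "reaches E ?Q x eta" using eta Cdef by auto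
  have ne: "eta \<noteq> z" using eta z by auto
  have cv: "(\<lambda>N. alpha E R N * R N eta z) \<longlonglongrightarrow> ?Q eta z"
    using alphaR_conv[OF fin A etaE z(1) ne] unfolding limit_rates_def
    by (simp add: convergent_LIMSEQ_iff)
  have "?Q eta z \<ge> 0"
    using nn etaE z ne alpha_nonneg[of E R, OF nn]
    by (intro tendsto_lowerbound[OF cv always_eventually]) (auto intro: mult_nonneg_nonneg)
  moreover have "\<not> ?Q eta z > 0"
  proof
    assume "?Q eta z > 0"
    then have "(eta, z) \<in> rate_edges E ?Q" using etaE z ne unfolding rate_edges_def by auto
    then have "reaches E ?Q x z" using rxe unfolding reaches_def by (rule rtrancl_into_rtrancl[rotated])
    moreover then have "reaches E ?Q z x" using rx unfolding recurrent_state_def by blast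
    ultimately have "z \<in> C" using Cdef z by auto
    then show False using z by simp
  qed
  ultimately have "?Q eta z = 0" by simp
  then show ?thesis using cv by simp
qed

theorem mainTheorem14:
  fixes E :: "'a set" and R :: "nat \<Rightarrow> 'a \<Rightarrow> 'a \<Rightarrow> real"
  assumes "finite E"
    and "\<And>N x y. x \<in> E \<Longrightarrow> y \<in> E \<Longrightarrow> x \<noteq> y \<Longrightarrow> R N x y \<ge> 0"
    and "\<And>N. irreducible_rates E (R N)"
    and "assumptionA E R"
    and "card (recurrent_classes E (limit_rates E R)) \<ge> 2"
  shows "(\<lambda>N. alpha E R N / gamma E R N) \<longlonglongrightarrow> 0"
proof -
  note fin = assms(1) and nn = assms(2) and A = assms(4)
  define Cs where "Cs = recurrent_classes E (limit_rates E R)"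
  define Es where "Es = \<Union>Cs"
  have CsE: "C \<subseteq> E" if "C \<in> Cs" for C using that unfolding Cs_def recurrent_classes_def by auto
  have EsE: "Es \<subseteq> E" using CsE unfolding Es_def by auto
  have finCs: "finite Cs" using CsE fin by (meson Pow_iff finite_Pow_iff finite_subset subsetI)
  have eq: "alpha E R N / gamma E R N =
     (\<Sum>C\<in>Cs. \<Sum>x\<in>C. \<Sum>y\<in>Es - C. alpha E R N * trace_rate E (R N) Es x y)" for N
    unfolding gamma_def Let_def Cs_def[symmetric] Es_def[symmetric]
    by (simp add: sum_distrib_left)
  show ?thesis unfolding eq
  proof (intro tendsto_null_sum)
    fix C x y assume C: "C \<in> Cs" and x: "x \<in> C" and y: "y \<in> Es - C"
    have yE: "y \<in> E" using y EsE by auto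
    have xE: "x \<in> E" using x CsE C by auto
    have CEs: "C \<subseteq> Es" using C unfolding Es_def by auto
    have split: "alpha E R N * trace_rate E (R N) Es x y =
       alpha E R N * R N x y + (\<Sum>z\<in>E - Es. (alpha E R N * R N x z) * hit_prob E (R N) Es z y)" for N
      unfolding trace_rate_def by (simp add: algebra_simps sum_distrib_left)
    have t1: "(\<lambda>N. alpha E R N * R N x y) \<longlonglongrightarrow> 0"
      using class_escape_zero[OF fin nn A C[unfolded Cs_def] x yE] y by simp
    have t2: "(\<lambda>N. \<Sum>z\<in>E - Es. (alpha E R N * R N x z) * hit_prob E (R N) Es z y) \<longlonglongrightarrow> 0"
    proof (intro tendsto_null_sum)
      fix z assume z: "z \<in> E - Es"
      have zC: "z \<notin> C" using z CEs by auto
      have zx: "x \<noteq> z" using x zC by auto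
      have l: "(\<lambda>N. alpha E R N * R N x z) \<longlonglongrightarrow> 0"
        using class_escape_zero[OF fin nn A C[unfolded Cs_def] x _ zC] z by simp
      have an: "alpha E R N * R N x z \<ge> 0" for N
        using alpha_nonneg[of E R, OF nn, of N] nn[OF xE _ zx, of N] z by simp
      have hb: "0 \<le> hit_prob E (R N) Es z y \<and> hit_prob E (R N) Es z y \<le> 1" for N
        by (rule hit_prob_bounds[OF fin _ EsE]) (use nn y in auto)
      show "(\<lambda>N. alpha E R N * R N x z * hit_prob E (R N) Es z y) \<longlonglongrightarrow> 0"
      proof (rule tendsto_sandwich[OF _ _ tendsto_const l])
        show "\<forall>\<^sub>F N in sequentially. 0 \<le> alpha E R N * R N x z * hit_prob E (R N) Es z y"
          using an hb by (intro always_eventually allI) (metis mult_nonneg_nonneg)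
        show "\<forall>\<^sub>F N in sequentially. alpha E R N * R N x z * hit_prob E (R N) Es z y \<le> alpha E R N * R N x z"
          using an hb by (intro always_eventually allI mult_left_le) auto
      qed
    qed
    show "(\<lambda>N. alpha E R N * trace_rate E (R N) Es x y) \<longlonglongrightarrow> 0"
      unfolding split using tendsto_add[OF t1 t2] by simp
  qed
qed

end
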